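(* Assume the convex setting described in the context, with optimal value $F^*$. Let $\epsilon>0$ and let $B=\{x:F(x)\le F^*+\epsilon\}$ be such that $B\cap\mathcal X$ is compact and contained in the interior of $\operatorname{dom}F$; let $D$ be the diameter of $B\cap\mathcal X$. Suppose that on $X:=B\cap\mathcal X$: (C2) there is a measurable $\kappa:\Xi\to\mathbb{R}_+$ with $\mathbb{E}[\kappa(\xi)]=L$ such that $f_\xi$ is $\kappa(\xi)$-Lipschitz on $X$ for all $\xi$; (C3) $\mathbb{E}[e^{t\kappa(\xi)}]$ is finite for all $t$ in a neighborhood of $0$; (C4) there is $\sigma>0$ such that $\mathbb{E}[e^{t(f_\xi(x)-F(x))}]\le e^{\sigma^2t^2/2}$ for all $x\in X$ and all $t\in\mathbb{R}$. Then there are constants $\ell$ and $\rho$, not depending on $N$, such that for all $N$ \[\mathbb{P}^N\{F(x^*(\xi^{[N]}))>F^*+\epsilon\}\le\exp(-N\ell)+2\left[\frac{8\rho DL}{\epsilon}\right]^n\exp\left\{-\frac{N\epsilon^2}{128\sigma^2}\right\}.\]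
   Context: Setting: $\mathcal{X}\subseteq\mathbb{R}^n$ is a nonempty closed convex set; $\xi$ is a random vector with support $\Xi$ and distribution $\mathbb P$; for each $\xi\in\Xi$, $f_\xi:\mathbb{R}^n\to\mathbb{R}\cup\{+\infty\}$ is convex; $F(x)=\mathbb{E}[f_\xi(x)]$, with $F>-\infty$ and $F(x)<+\infty$ for some $x\in\mathcal X$; $\operatorname{dom}F=\{x:F(x)<+\infty\}$; the optimal set $\mathcal X^*$ of $\inf_{x\in\mathcal X}F(x)$ is nonempty and compact, and $F^*$ is the optimal value. $\xi^{[N]}$ is an i.i.d. sample of size $N$ with product measure $\mathbb P^N$, $\hat F_N(x)=\frac1N\sum_{i=1}^Nf_{\xi^i}(x)$, and $x^*(\xi^{[N]})$ is an optimal solution of $\inf_{x\in\mathcal X}\hat F_N(x)$ assigned to each sample. *)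

theory Defs
  imports "HOL-Probability.Probability"
begin

definition ext_convex :: "('a::real_vector \<Rightarrow> ereal) \<Rightarrow> bool" where
  "ext_convex g \<longleftrightarrow> (\<forall>x y. \<forall>t::real. 0 \<le> t \<and> t \<le> 1 \<longrightarrow>
      g (t *\<^sub>R x + (1 - t) *\<^sub>R y) \<le> ereal t * g x + ereal (1 - t) * g y)"

definition ereal_expectation :: "'b measure \<Rightarrow> ('b \<Rightarrow> ereal) \<Rightarrow> ereal" where
  "ereal_expectation M g =
     enn2ereal (\<integral>\<^sup>+ w. e2ennreal (g w) \<partial>M) - enn2ereal (\<integral>\<^sup>+ w. e2ennreal (- g w) \<partial>M)"

definition saa_obj :: "('b \<Rightarrow> 'a \<Rightarrow> ereal) \<Rightarrow> nat \<Rightarrow> (nat \<Rightarrow> 'b) \<Rightarrow> 'a \<Rightarrow> ereal" where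
  "saa_obj f N s x = (\<Sum>i<N. f (s i) x) / ereal (real N)"

definition ext_lipschitz_on :: "'a::metric_space set \<Rightarrow> real \<Rightarrow> ('a \<Rightarrow> ereal) \<Rightarrow> bool" where
  "ext_lipschitz_on S k g \<longleftrightarrow> (\<forall>x\<in>S. \<bar>g x\<bar> \<noteq> \<infinity>) \<and>
     (\<forall>x\<in>S. \<forall>y\<in>S. \<bar>real_of_ereal (g x) - real_of_ereal (g y)\<bar> \<le> k * dist x y)"

end

theory Submission
  imports Defs
begin

lemma chernoff:
  fixes P :: "'a measure" and W :: "'a \<Rightarrow> real"
  assumes P: "prob_space P" and W[measurable]: "W \<in> borel_measurable P" and t: "t > 0"
  shows "emeasure (PiM {..<N} (\<lambda>_. P)) {s\<in>space (PiM {..<N} (\<lambda>_. P)). a \<le> (\<Sum>i<N. W (s i))}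
     \<le> ennreal (exp (-t*a)) * (\<integral>\<^sup>+x. ennreal (exp (t * W x)) \<partial>P)^N"
proof -
  interpret prob_space P by fact
  interpret product_sigma_finite "\<lambda>_::nat. P"
    by (simp add: product_sigma_finite_def sigma_finite_measure_axioms)
  define PN where "PN = PiM {..<N} (\<lambda>_. P)"
  define S where "S = {s\<in>space PN. a \<le> (\<Sum>i<N. W (s i))}"
  have S: "S \<in> sets PN" unfolding S_def PN_def by measurable
  have "ennreal (exp (t*a)) * emeasure PN S = (\<integral>\<^sup>+ s. ennreal (exp (t*a)) * indicator S s \<partial>PN)"
    using S by (simp add: nn_integral_cmult_indicator)
  also have "\<dots> \<le> (\<integral>\<^sup>+ s. ennreal (exp (t * (\<Sum>i<N. W (s i)))) \<partial>PN)"
  proof (rule nn_integral_mono)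
    fix s assume "s \<in> space PN"
    show "ennreal (exp (t*a)) * indicator S s \<le> ennreal (exp (t * (\<Sum>i<N. W (s i))))"
    proof (cases "s \<in> S")
      case True
      then have "t*a \<le> t * (\<Sum>i<N. W (s i))" using t unfolding S_def by auto
      then show ?thesis using True by (simp add: ennreal_leI)
    qed simp
  qed
  also have "\<dots> = (\<integral>\<^sup>+ s. (\<Prod>i<N. ennreal (exp (t * W (s i)))) \<partial>PN)"
    by (simp add: sum_distrib_left exp_sum prod_ennreal)
  also have "\<dots> = (\<Prod>i<N. (\<integral>\<^sup>+x. ennreal (exp (t * W x)) \<partial>P))"
    unfolding PN_def by (rule product_nn_integral_prod) auto
  also have "\<dots> = (\<integral>\<^sup>+x. ennreal (exp (t * W x)) \<partial>P)^N" by simp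
  finally have *: "ennreal (exp (t*a)) * emeasure PN S \<le> (\<integral>\<^sup>+x. ennreal (exp (t * W x)) \<partial>P)^N" .
  have "emeasure PN S = ennreal (exp (-t*a)) * (ennreal (exp (t*a)) * emeasure PN S)"
    by (simp add: mult.assoc[symmetric] ennreal_mult''[symmetric] exp_add[symmetric])
  also have "\<dots> \<le> ennreal (exp (-t*a)) * (\<integral>\<^sup>+x. ennreal (exp (t * W x)) \<partial>P)^N"
    by (rule mult_left_mono[OF *]) simp
  finally show ?thesis unfolding PN_def S_def .
qed

lemma e2ennreal_top_iff: "e2ennreal x = top \<longleftrightarrow> x = \<infinity>"
  by (cases x) (auto simp: e2ennreal_neg)

lemma ee_integral:
  fixes g :: "'a \<Rightarrow> ereal"
  assumes g[measurable]: "g \<in> borel_measurable P"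
    and neg: "(\<integral>\<^sup>+ w. e2ennreal (- g w) \<partial>P) < \<infinity>"
    and fin: "ereal_expectation P g < \<infinity>"
  shows "integrable P (\<lambda>w. real_of_ereal (g w))"
    "ereal_expectation P g = ereal (\<integral>w. real_of_ereal (g w) \<partial>P)"
    "AE w in P. \<bar>g w\<bar> \<noteq> \<infinity>"
proof -
  define p where "p = (\<integral>\<^sup>+ w. e2ennreal (g w) \<partial>P)"
  define q where "q = (\<integral>\<^sup>+ w. e2ennreal (- g w) \<partial>P)"
  have q: "q \<noteq> top" using neg unfolding q_def by auto
  have "enn2ereal p - enn2ereal q < \<infinity>" using fin unfolding ereal_expectation_def p_def q_def .
  then have p: "p \<noteq> top" using q
    by (cases p rule: ennreal_cases; cases q rule: ennreal_cases) auto
  have A1: "AE w in P. e2ennreal (g w) \<noteq> \<infinity>"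
    using p unfolding p_def by (intro nn_integral_PInf_AE) auto
  have A2: "AE w in P. e2ennreal (- g w) \<noteq> \<infinity>"
    using q unfolding q_def by (intro nn_integral_PInf_AE) auto
  show AE: "AE w in P. \<bar>g w\<bar> \<noteq> \<infinity>"
    using A1 A2 by eventually_elim (auto simp: e2ennreal_top_iff)
  have ep: "(\<integral>\<^sup>+ w. ennreal (real_of_ereal (g w)) \<partial>P) = p"
    unfolding p_def by (rule nn_integral_cong_AE, use AE in eventually_elim) (auto)
  have eq: "(\<integral>\<^sup>+ w. ennreal (- real_of_ereal (g w)) \<partial>P) = q"
    unfolding q_def by (rule nn_integral_cong_AE, use AE in eventually_elim) (auto)
  show int: "integrable P (\<lambda>w. real_of_ereal (g w))"
    unfolding real_integrable_def using ep eq p q by auto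
  show "ereal_expectation P g = ereal (\<integral>w. real_of_ereal (g w) \<partial>P)"
    unfolding ereal_expectation_def real_lebesgue_integral_def[OF int] ep eq p_def[symmetric] q_def[symmetric]
    using p q by (cases p; cases q) auto
qed

lemma ext_convexD: "ext_convex g \<Longrightarrow> 0 \<le> t \<Longrightarrow> t \<le> 1 \<Longrightarrow>
   g (t *\<^sub>R x + (1-t) *\<^sub>R y) \<le> ereal t * g x + ereal (1-t) * g y"
  unfolding ext_convex_def by blast

lemma conv_F:
  fixes f :: "'b \<Rightarrow> 'a::real_vector \<Rightarrow> ereal"
  assumes f_convex: "\<forall>\<xi>\<in>space P. ext_convex (f \<xi>)"
    and f_meas: "\<forall>x. (\<lambda>\<xi>. f \<xi> x) \<in> borel_measurable P"
    and F_well_def: "\<forall>x. (\<integral>\<^sup>+ \<xi>. e2ennreal (- f \<xi> x) \<partial>P) < \<infinity>"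
    and U: "convex U" "\<forall>x\<in>U. ereal_expectation P (\<lambda>\<xi>. f \<xi> x) < \<infinity>"
  shows "convex_on U (\<lambda>x. real_of_ereal (ereal_expectation P (\<lambda>\<xi>. f \<xi> x)))"
proof (intro convex_onI U(1))
  fix t :: real and x y assume t: "0 < t" "t < 1" and xy: "x \<in> U" "y \<in> U"
  define w where "w = (1 - t) *\<^sub>R x + t *\<^sub>R y"
  have w: "w \<in> U" using U(1) xy t unfolding w_def by (simp add: convex_def)
  note ex = ee_integral[of "\<lambda>\<xi>. f \<xi> x" P] and ey = ee_integral[of "\<lambda>\<xi>. f \<xi> y" P]
    and ew = ee_integral[of "\<lambda>\<xi>. f \<xi> w" P]
  have hx: "integrable P (\<lambda>\<xi>. real_of_ereal (f \<xi> x))" "ereal_expectation P (\<lambda>\<xi>. f \<xi> x) = ereal (\<integral>\<xi>. real_of_ereal (f \<xi> x) \<partial>P)"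
     "AE \<xi> in P. \<bar>f \<xi> x\<bar> \<noteq> \<infinity>"
    using ex f_meas F_well_def U(2) xy by auto
  have hy: "integrable P (\<lambda>\<xi>. real_of_ereal (f \<xi> y))" "ereal_expectation P (\<lambda>\<xi>. f \<xi> y) = ereal (\<integral>\<xi>. real_of_ereal (f \<xi> y) \<partial>P)"
     "AE \<xi> in P. \<bar>f \<xi> y\<bar> \<noteq> \<infinity>"
    using ey f_meas F_well_def U(2) xy by auto
  have hw: "integrable P (\<lambda>\<xi>. real_of_ereal (f \<xi> w))" "ereal_expectation P (\<lambda>\<xi>. f \<xi> w) = ereal (\<integral>\<xi>. real_of_ereal (f \<xi> w) \<partial>P)"
     "AE \<xi> in P. \<bar>f \<xi> w\<bar> \<noteq> \<infinity>"
    using ew f_meas F_well_def U(2) w by auto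
  have AE: "AE \<xi> in P. real_of_ereal (f \<xi> w) \<le> (1 - t) * real_of_ereal (f \<xi> x) + t * real_of_ereal (f \<xi> y)"
    using hx(3) hy(3) hw(3) AE_space
  proof eventually_elim
    case (elim \<xi>)
    then have "ext_convex (f \<xi>)" using f_convex by auto
    from ext_convexD[OF this, of "1-t" x y] t
    have h: "f \<xi> w \<le> ereal (1-t) * f \<xi> x + ereal t * f \<xi> y" unfolding w_def by simp
    have "ereal (real_of_ereal (f \<xi> w)) \<le> ereal (1-t) * ereal (real_of_ereal (f \<xi> x)) + ereal t * ereal (real_of_ereal (f \<xi> y))"
      using h elim by (simp add: ereal_real)
    then show ?case by simp
  qed
  have "(\<integral>\<xi>. real_of_ereal (f \<xi> w) \<partial>P) \<le> (\<integral>\<xi>. (1 - t) * real_of_ereal (f \<xi> x) + t * real_of_ereal (f \<xi> y) \<partial>P)"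
    by (rule integral_mono_AE) (use hx hy hw AE in auto)
  also have "\<dots> = (1 - t) * (\<integral>\<xi>. real_of_ereal (f \<xi> x) \<partial>P) + t * (\<integral>\<xi>. real_of_ereal (f \<xi> y) \<partial>P)"
    using hx hy by simp
  finally show "real_of_ereal (ereal_expectation P (\<lambda>\<xi>. f \<xi> ((1 - t) *\<^sub>R x + t *\<^sub>R y)))
        \<le> (1 - t) * real_of_ereal (ereal_expectation P (\<lambda>\<xi>. f \<xi> x)) + t * real_of_ereal (ereal_expectation P (\<lambda>\<xi>. f \<xi> y))"
    using hx hy hw unfolding w_def by simp
qed

lemma crossing:
  fixes F :: "'a::real_normed_vector \<Rightarrow> ereal"
  assumes X: "convex X" and Yc: "closed Y" and Y: "Y = {x\<in>X. F x \<le> ereal c}"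
    and dom: "Y \<subseteq> interior {x. F x < \<infinity>}" and nminf: "\<forall>x. F x \<noteq> -\<infinity>"
    and cont: "\<forall>y\<in>Y. isCont (\<lambda>x. real_of_ereal (F x)) y"
    and x0: "x0 \<in> Y" and xh: "xh \<in> X" "F xh > ereal c"
  shows "\<exists>t\<in>{0..<1}. (t *\<^sub>R xh + (1 - t) *\<^sub>R x0) \<in> Y \<and> F (t *\<^sub>R xh + (1 - t) *\<^sub>R x0) = ereal c"
proof -
  define p where "p = (\<lambda>t::real. t *\<^sub>R xh + (1 - t) *\<^sub>R x0)"
  have pc: "continuous (at t) p" for t unfolding p_def by (intro continuous_intros)
  have pX: "t \<in> {0..1} \<Longrightarrow> p t \<in> X" for t
    using X xh(1) x0 Y unfolding p_def convex_def by auto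
  define T where "T = {0..1} \<inter> p -` Y"
  have Tc: "closed T" unfolding T_def by (intro closed_Int closed_atLeastAtMost continuous_closed_vimage Yc pc)
  have T0: "0 \<in> T" using x0 unfolding T_def p_def by simp
  have Tb: "bdd_above T" unfolding T_def by (rule bdd_aboveI[of _ 1]) auto
  define ts where "ts = Sup T"
  have tsT: "ts \<in> T" unfolding ts_def using Tc T0 Tb closed_contains_Sup by blast
  have ts0: "0 \<le> ts" "ts \<le> 1" using tsT unfolding T_def by auto
  have "ts \<noteq> 1" proof
    assume "ts = 1" then have "xh \<in> Y" using tsT unfolding T_def p_def by simp
    then show False using xh Y by auto
  qed
  with ts0 have ts1: "ts < 1" by simp
  define z where "z = p ts"
  have zY: "z \<in> Y" using tsT unfolding T_def z_def by simp
  then have zc: "F z \<le> ereal c" using Y by auto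
  have "z \<in> interior {x. F x < \<infinity>}" using zY dom by auto
  then obtain r where r: "r > 0" "ball z r \<subseteq> {x. F x < \<infinity>}"
    unfolding mem_interior by blast
  have Fz: "F z = ereal (real_of_ereal (F z))"
    using zc nminf[rule_format, of z] by (cases "F z") auto
  have "\<not> real_of_ereal (F z) < c"
  proof
    assume lt: "real_of_ereal (F z) < c"
    have lim: "(p \<longlongrightarrow> z) (at_right ts)"
      unfolding z_def using pc[of ts] by (simp add: continuous_at filterlim_at_split)
    have e1: "eventually (\<lambda>t. p t \<in> ball z r) (at_right ts)"
      using lim r(1) by (intro topological_tendstoD) auto
    have "((\<lambda>t. real_of_ereal (F (p t))) \<longlongrightarrow> real_of_ereal (F z)) (at_right ts)"
      using cont zY lim isCont_tendsto_compose by blast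
    then have e2: "eventually (\<lambda>t. real_of_ereal (F (p t)) < c) (at_right ts)"
      using lt order_tendstoD(2) by blast
    have e3: "eventually (\<lambda>t. ts < t \<and> t < 1) (at_right ts)"
      unfolding eventually_at_right_field using ts1 by blast
    have "eventually (\<lambda>t. p t \<in> ball z r \<and> real_of_ereal (F (p t)) < c \<and> ts < t \<and> t < 1) (at_right ts)"
      using e1 e2 e3 by eventually_elim auto
    then obtain t where t: "p t \<in> ball z r" "real_of_ereal (F (p t)) < c" "ts < t" "t < 1"
      using eventually_happens'[of "at_right ts"] trivial_limit_at_right_real unfolding trivial_limit_def by blast
    have "t \<notin> T" using t(3) Tb ts_def cSup_upper by fastforce
    moreover have "p t \<in> X" using pX t ts0 by auto
    ultimately have "F (p t) > ereal c" unfolding T_def using Y t ts0 by auto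
    moreover have "F (p t) < \<infinity>" using t(1) r(2) by auto
    ultimately show False using t(2) nminf[rule_format, of "p t"] by (cases "F (p t)") auto
  qed
  moreover have "real_of_ereal (F z) \<le> c" using zc Fz by (metis ereal_less_eq(3))
  ultimately have "F z = ereal c" using Fz by (metis antisym not_less)
  then show ?thesis using zY ts0 ts1 unfolding z_def p_def by auto
qed

lemma PiM_mem: "s \<in> space (PiM I (\<lambda>_. P)) \<Longrightarrow> i \<in> I \<Longrightarrow> s i \<in> space P"
  by (auto simp: space_PiM)

lemma saa_real:
  assumes "\<forall>i<N. \<bar>f (s i) x\<bar> \<noteq> \<infinity>" "N \<ge> 1"
  shows "saa_obj f N s x = ereal ((\<Sum>i<N. real_of_ereal (f (s i) x)) / real N)"
proof -
  have "(\<Sum>i<N. f (s i) x) = (\<Sum>i<N. ereal (real_of_ereal (f (s i) x)))"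
    using assms(1) by (intro sum.cong) (auto simp: ereal_real)
  also have "\<dots> = ereal (\<Sum>i<N. real_of_ereal (f (s i) x))" by simp
  finally show ?thesis using assms(2) unfolding saa_obj_def by simp
qed

lemma saa_pinf:
  assumes "i < N" "f (s i) x = \<infinity>"
  shows "saa_obj f N s x = \<infinity>"
proof -
  have "(\<Sum>i<N. f (s i) x) = \<infinity>" using assms sum_Pinfty[of "\<lambda>i. f (s i) x" "{..<N}"] by auto
  then show ?thesis using assms(1) unfolding saa_obj_def by simp
qed

lemma subg_tail:
  fixes W :: "'a \<Rightarrow> real"
  assumes P: "prob_space P" and W: "W \<in> borel_measurable P" and s: "\<sigma> > 0" and e: "\<epsilon> > 0"
    and mgf: "(\<integral>\<^sup>+\<xi>. ennreal (exp ((\<epsilon>/(8*\<sigma>\<^sup>2)) * W \<xi>)) \<partial>P) \<le> ennreal (exp (\<sigma>\<^sup>2*(\<epsilon>/(8*\<sigma>\<^sup>2))\<^sup>2/2))"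
  shows "emeasure (PiM {..<N} (\<lambda>_. P)) {s\<in>space (PiM {..<N} (\<lambda>_. P)). real N * \<epsilon> / 8 \<le> (\<Sum>i<N. W (s i))}
     \<le> ennreal (exp (- real N * \<epsilon>\<^sup>2 / (128 * \<sigma>\<^sup>2)))"
proof -
  define t where "t = \<epsilon>/(8*\<sigma>\<^sup>2)"
  have t: "t > 0" using s e unfolding t_def by simp
  have "emeasure (PiM {..<N} (\<lambda>_. P)) {s\<in>space (PiM {..<N} (\<lambda>_. P)). real N * \<epsilon> / 8 \<le> (\<Sum>i<N. W (s i))}
     \<le> ennreal (exp (-t*(real N * \<epsilon> / 8))) * (\<integral>\<^sup>+x. ennreal (exp (t * W x)) \<partial>P)^N"
    by (rule chernoff[OF P W t])
  also have "\<dots> \<le> ennreal (exp (-t*(real N * \<epsilon> / 8))) * ennreal (exp (\<sigma>\<^sup>2*t\<^sup>2/2))^N"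
    by (intro mult_left_mono power_mono) (use mgf in \<open>auto simp: t_def\<close>)
  also have "\<dots> = ennreal (exp (-t*(real N * \<epsilon> / 8)) * exp (\<sigma>\<^sup>2*t\<^sup>2/2)^N)"
    by (simp add: ennreal_power ennreal_mult)
  also have "exp (-t*(real N * \<epsilon> / 8)) * exp (\<sigma>\<^sup>2*t\<^sup>2/2)^N = exp (-t*(real N * \<epsilon> / 8) + real N * (\<sigma>\<^sup>2*t\<^sup>2/2))"
    by (simp add: exp_of_nat_mult[symmetric] exp_add[symmetric])
  also have "-t*(real N * \<epsilon> / 8) + real N * (\<sigma>\<^sup>2*t\<^sup>2/2) = - real N * \<epsilon>\<^sup>2 / (128 * \<sigma>\<^sup>2)"
    using s unfolding t_def by (simp add: field_simps power2_eq_square)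
  finally show ?thesis .
qed

theorem corollary3p4:
  fixes P :: "'xi measure"
    and f :: "'xi \<Rightarrow> real ^ 'n \<Rightarrow> ereal"
    and \<X> :: "(real ^ 'n) set"
    and xstar :: "nat \<Rightarrow> (nat \<Rightarrow> 'xi) \<Rightarrow> real ^ 'n"
    and \<kappa> :: "'xi \<Rightarrow> real"
    and \<epsilon> \<sigma> :: real
  defines "F \<equiv> (\<lambda>x. ereal_expectation P (\<lambda>\<xi>. f \<xi> x))"
  defines "Fstar \<equiv> (INF x\<in>\<X>. F x)"
  defines "B \<equiv> {x. F x \<le> Fstar + ereal \<epsilon>}"
  defines "D \<equiv> diameter (B \<inter> \<X>)"
  defines "L \<equiv> (\<integral>\<xi>. \<kappa> \<xi> \<partial>P)"
  assumes P: "prob_space P"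
    and X_closed: "closed \<X>" and X_convex: "convex \<X>" and X_ne: "\<X> \<noteq> {}"
    and f_convex: "\<forall>\<xi>\<in>space P. ext_convex (f \<xi>)"
    and f_not_minf: "\<forall>\<xi>\<in>space P. \<forall>x. f \<xi> x \<noteq> -\<infinity>"
    and f_meas: "\<forall>x. (\<lambda>\<xi>. f \<xi> x) \<in> borel_measurable P"
    and F_well_def: "\<forall>x. (\<integral>\<^sup>+ \<xi>. e2ennreal (- f \<xi> x) \<partial>P) < \<infinity>"
    and F_finite_somewhere: "\<exists>x\<in>\<X>. F x < \<infinity>"
    and opt_ne: "{x\<in>\<X>. F x = Fstar} \<noteq> {}"
    and opt_compact: "compact {x\<in>\<X>. F x = Fstar}"
    and xstar_opt: "\<forall>N\<ge>1. \<forall>s\<in>space (PiM {..<N} (\<lambda>_. P)).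
        xstar N s \<in> \<X> \<and> (\<forall>y\<in>\<X>. saa_obj f N s (xstar N s) \<le> saa_obj f N s y)"
    and event_meas: "\<forall>N\<ge>1. {s\<in>space (PiM {..<N} (\<lambda>_. P)). F (xstar N s) > Fstar + ereal \<epsilon>}
        \<in> sets (PiM {..<N} (\<lambda>_. P))"
    and eps_pos: "\<epsilon> > 0"
    and BX_compact: "compact (B \<inter> \<X>)"
    and BX_interior: "B \<inter> \<X> \<subseteq> interior {x. F x < \<infinity>}"
    and kappa_meas: "\<kappa> \<in> borel_measurable P"
    and kappa_nonneg: "\<forall>\<xi>\<in>space P. \<kappa> \<xi> \<ge> 0"
    and kappa_integrable: "integrable P \<kappa>"
    and C2: "\<forall>\<xi>\<in>space P. ext_lipschitz_on (B \<inter> \<X>) (\<kappa> \<xi>) (f \<xi>)"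
    and C3: "\<exists>\<delta>>0. \<forall>t. \<bar>t\<bar> < \<delta> \<longrightarrow>
        (\<integral>\<^sup>+ \<xi>. ennreal (exp (t * \<kappa> \<xi>)) \<partial>P) < \<infinity>"
    and sigma_pos: "\<sigma> > 0"
    and C4: "\<forall>x\<in>B \<inter> \<X>. \<forall>t::real.
        (\<integral>\<^sup>+ \<xi>. ennreal (exp (t * (real_of_ereal (f \<xi> x) - real_of_ereal (F x)))) \<partial>P)
          \<le> ennreal (exp (\<sigma>\<^sup>2 * t\<^sup>2 / 2))"
  shows "\<exists>ell>0. \<exists>\<rho>>0. \<forall>N\<ge>(1::nat).
     measure (PiM {..<N} (\<lambda>_. P))
       {s\<in>space (PiM {..<N} (\<lambda>_. P)). F (xstar N s) > Fstar + ereal \<epsilon>}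
     \<le> exp (- real N * ell)
        + 2 * (8 * \<rho> * D * L / \<epsilon>) ^ CARD('n) * exp (- real N * \<epsilon>\<^sup>2 / (128 * \<sigma>\<^sup>2))"
proof -
  interpret prob_space P by (rule P)
  have Fnm: "F x \<noteq> -\<infinity>" for x
  proof -
    have q: "(\<integral>\<^sup>+ \<xi>. e2ennreal (- f \<xi> x) \<partial>P) \<noteq> top" using F_well_def[rule_format, of x] by simp
    then obtain r where r: "(\<integral>\<^sup>+ \<xi>. e2ennreal (- f \<xi> x) \<partial>P) = ennreal r" "r \<ge> 0"
      by (cases "(\<integral>\<^sup>+ \<xi>. e2ennreal (- f \<xi> x) \<partial>P)" rule: ennreal_cases) auto
    have "enn2ereal (\<integral>\<^sup>+ \<xi>. e2ennreal (f \<xi> x) \<partial>P) \<ge> 0" by (rule enn2ereal_nonneg)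
    then show ?thesis unfolding F_def ereal_expectation_def r
      by (cases "enn2ereal (\<integral>\<^sup>+ \<xi>. e2ennreal (f \<xi> x) \<partial>P)") (auto simp: r(2))
  qed
  obtain x0 where x0: "x0 \<in> \<X>" "F x0 = Fstar" using opt_ne by auto
  obtain x1 where x1: "x1 \<in> \<X>" "F x1 < \<infinity>" using F_finite_somewhere by auto
  have "Fstar \<le> F x1" unfolding Fstar_def using x1(1) by (rule INF_lower)
  then have "Fstar < \<infinity>" using x1 by auto
  then obtain fs where fs: "Fstar = ereal fs" using Fnm[of x0] x0 by (cases Fstar) auto
  define c where "c = fs + \<epsilon>"
  have Bc: "Fstar + ereal \<epsilon> = ereal c" unfolding c_def fs by simp
  have BX: "B \<inter> \<X> = {x\<in>\<X>. F x \<le> ereal c}" unfolding B_def Bc by auto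
  have x0B: "x0 \<in> B \<inter> \<X>" using x0 BX fs eps_pos c_def by auto
  have Fx0: "real_of_ereal (F x0) = fs" using x0 fs by simp
  have Fint: "integrable P (\<lambda>\<xi>. real_of_ereal (f \<xi> x)) \<and> F x = ereal (\<integral>\<xi>. real_of_ereal (f \<xi> x) \<partial>P)"
    if "x \<in> B \<inter> \<X>" for x
  proof -
    have "F x < \<infinity>" using that BX by auto
    then show ?thesis using ee_integral[of "\<lambda>\<xi>. f \<xi> x" P] f_meas F_well_def unfolding F_def by auto
  qed
  have ffin: "\<bar>f \<xi> x\<bar> \<noteq> \<infinity>" if "\<xi> \<in> space P" "x \<in> B \<inter> \<X>" for \<xi> x
    using C2 that unfolding ext_lipschitz_on_def by auto
  have flip: "real_of_ereal (f \<xi> x) - real_of_ereal (f \<xi> y) \<le> \<kappa> \<xi> * dist x y"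
    if "\<xi> \<in> space P" "x \<in> B \<inter> \<X>" "y \<in> B \<inter> \<X>" for \<xi> x y
  proof -
    have "\<bar>real_of_ereal (f \<xi> x) - real_of_ereal (f \<xi> y)\<bar> \<le> \<kappa> \<xi> * dist x y"
      using C2 that unfolding ext_lipschitz_on_def by blast
    then show ?thesis by linarith
  qed
  have Flip: "real_of_ereal (F x) - real_of_ereal (F y) \<le> L * dist x y"
    if xy: "x \<in> B \<inter> \<X>" "y \<in> B \<inter> \<X>" for x y
  proof -
    have "real_of_ereal (F x) - real_of_ereal (F y) = (\<integral>\<xi>. real_of_ereal (f \<xi> x) - real_of_ereal (f \<xi> y) \<partial>P)"
      using Fint[OF xy(1)] Fint[OF xy(2)] by simp
    also have "\<dots> \<le> (\<integral>\<xi>. \<kappa> \<xi> * dist x y \<partial>P)"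
      by (rule integral_mono) (use Fint[OF xy(1)] Fint[OF xy(2)] kappa_integrable flip xy in auto)
    also have "\<dots> = L * dist x y" unfolding L_def by simp
    finally show ?thesis .
  qed
  have cont: "\<forall>y\<in>B \<inter> \<X>. isCont (\<lambda>x. real_of_ereal (F x)) y"
  proof
    fix y assume y: "y \<in> B \<inter> \<X>"
    then have "y \<in> interior {x. F x < \<infinity>}" using BX_interior by auto
    then obtain r where r: "r > 0" "ball y r \<subseteq> {x. F x < \<infinity>}" unfolding mem_interior by blast
    have "convex_on (ball y r) (\<lambda>x. real_of_ereal (F x))"
      unfolding F_def by (rule conv_F) (use f_convex f_meas F_well_def r in \<open>auto simp: F_def\<close>)
    then have "continuous_on (ball y r) (\<lambda>x. real_of_ereal (F x))"
      by (intro convex_on_continuous) auto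
    then show "isCont (\<lambda>x. real_of_ereal (F x)) y"
      using r(1) continuous_on_eq_continuous_at[OF open_ball] centre_in_ball by blast
  qed
  have cross: "\<exists>z\<in>B \<inter> \<X>. F z = ereal c \<and> (\<Sum>i<N. real_of_ereal (f (s i) z)) \<le> (\<Sum>i<N. real_of_ereal (f (s i) x0))"
    if N: "N \<ge> 1" and s: "s \<in> space (PiM {..<N} (\<lambda>_. P))" and ev: "F (xstar N s) > Fstar + ereal \<epsilon>" for N s
  proof -
    have si: "s i \<in> space P" if "i < N" for i using PiM_mem[OF s] that by auto
    define xh where "xh = xstar N s"
    have xh: "xh \<in> \<X>" "saa_obj f N s xh \<le> saa_obj f N s x0"
      using xstar_opt N s x0 unfolding xh_def by auto
    have f0: "\<forall>i<N. \<bar>f (s i) x0\<bar> \<noteq> \<infinity>" using ffin si x0B by auto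
    have s0: "saa_obj f N s x0 = ereal ((\<Sum>i<N. real_of_ereal (f (s i) x0)) / real N)"
      using saa_real[of N f s x0] f0 N by blast
    have fh: "\<forall>i<N. \<bar>f (s i) xh\<bar> \<noteq> \<infinity>"
    proof (intro allI impI)
      fix i assume i: "i < N"
      have "f (s i) xh \<noteq> \<infinity>"
      proof
        assume "f (s i) xh = \<infinity>"
        then have "saa_obj f N s xh = \<infinity>" by (rule saa_pinf[OF i])
        then show False using xh(2) s0 by simp
      qed
      moreover have "f (s i) xh \<noteq> -\<infinity>" using f_not_minf si[OF i] by auto
      ultimately show "\<bar>f (s i) xh\<bar> \<noteq> \<infinity>" by auto
    qed
    have sh: "saa_obj f N s xh = ereal ((\<Sum>i<N. real_of_ereal (f (s i) xh)) / real N)"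
      using saa_real[of N f s xh] fh N by blast
    have "(\<Sum>i<N. real_of_ereal (f (s i) xh)) / real N \<le> (\<Sum>i<N. real_of_ereal (f (s i) x0)) / real N"
      using xh(2) unfolding s0 sh by simp
    then have Sh: "(\<Sum>i<N. real_of_ereal (f (s i) xh)) \<le> (\<Sum>i<N. real_of_ereal (f (s i) x0))"
      using N by (simp add: divide_le_cancel)
    have "F xh > ereal c" using ev Bc unfolding xh_def by simp
    then obtain t where t: "t \<in> {0..<1}" "t *\<^sub>R xh + (1 - t) *\<^sub>R x0 \<in> B \<inter> \<X>"
        "F (t *\<^sub>R xh + (1 - t) *\<^sub>R x0) = ereal c"
      using crossing[OF X_convex compact_imp_closed[OF BX_compact] BX BX_interior _ cont x0B xh(1)] Fnm
      by blast
    define z where "z = t *\<^sub>R xh + (1 - t) *\<^sub>R x0"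
    have zi: "real_of_ereal (f (s i) z) \<le> t * real_of_ereal (f (s i) xh) + (1 - t) * real_of_ereal (f (s i) x0)"
      if i: "i < N" for i
    proof -
      have "ext_convex (f (s i))" using f_convex si[OF i] by auto
      from ext_convexD[OF this, of t xh x0] t
      have h: "f (s i) z \<le> ereal t * f (s i) xh + ereal (1 - t) * f (s i) x0" unfolding z_def by simp
      have "ereal (real_of_ereal (f (s i) z)) \<le> ereal t * ereal (real_of_ereal (f (s i) xh)) + ereal (1 - t) * ereal (real_of_ereal (f (s i) x0))"
        using h ffin[OF si[OF i] t(2)[folded z_def]] fh f0 i by (simp add: ereal_real)
      then show ?thesis by simp
    qed
    have "(\<Sum>i<N. real_of_ereal (f (s i) z)) \<le> (\<Sum>i<N. t * real_of_ereal (f (s i) xh) + (1 - t) * real_of_ereal (f (s i) x0))"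
      by (rule sum_mono) (use zi in auto)
    also have "\<dots> = t * (\<Sum>i<N. real_of_ereal (f (s i) xh)) + (1 - t) * (\<Sum>i<N. real_of_ereal (f (s i) x0))"
      by (simp add: sum.distrib sum_distrib_left)
    also have "\<dots> \<le> t * (\<Sum>i<N. real_of_ereal (f (s i) x0)) + (1 - t) * (\<Sum>i<N. real_of_ereal (f (s i) x0))"
      using Sh t(1) by (simp add: mult_left_mono)
    also have "\<dots> = (\<Sum>i<N. real_of_ereal (f (s i) x0))" by (simp add: algebra_simps)
    finally show ?thesis using t unfolding z_def by auto
  qed
  have D0: "0 \<le> D" unfolding D_def by (rule diameter_ge_0[OF compact_imp_bounded[OF BX_compact]])
  have L0: "0 \<le> L" unfolding L_def using kappa_nonneg by (simp add: integral_nonneg)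
  have RHS0: "0 \<le> exp (- real N * ell) + 2 * (8 * \<rho> * D * L / \<epsilon>) ^ CARD('n) * exp (- real N * \<epsilon>\<^sup>2 / (128 * \<sigma>\<^sup>2))"
    if "\<rho> > 0" for N ell \<rho>
    using that D0 L0 eps_pos by (intro add_nonneg_nonneg mult_nonneg_nonneg zero_le_power divide_nonneg_pos) auto
  show ?thesis
  proof (cases "\<exists>z\<in>B \<inter> \<X>. F z = ereal c")
    case False
    show ?thesis
    proof (intro exI[of _ "1::real"] conjI allI impI)
      fix N :: nat assume N: "N \<ge> 1"
      have e: "{s\<in>space (PiM {..<N} (\<lambda>_. P)). F (xstar N s) > Fstar + ereal \<epsilon>} = {}"
        using cross[OF N] False by blast
      show "measure (PiM {..<N} (\<lambda>_. P))
         {s\<in>space (PiM {..<N} (\<lambda>_. P)). F (xstar N s) > Fstar + ereal \<epsilon>}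
         \<le> exp (- real N * 1) + 2 * (8 * 1 * D * L / \<epsilon>) ^ CARD('n) * exp (- real N * \<epsilon>\<^sup>2 / (128 * \<sigma>\<^sup>2))"
        unfolding e using RHS0[of 1 N 1] by simp
    qed simp_all
  next
    case True
    then obtain z where z: "z \<in> B \<inter> \<X>" "F z = ereal c" by blast
    have "real_of_ereal (F z) - real_of_ereal (F x0) \<le> L * dist z x0" by (rule Flip[OF z(1) x0B])
    also have "\<dots> \<le> L * D"
      using diameter_bounded_bound[OF compact_imp_bounded[OF BX_compact] z(1) x0B] L0
      unfolding D_def by (simp add: mult_left_mono)
    finally have "\<epsilon> \<le> L * D" using z(2) Fx0 unfolding c_def by simp
    then have "L \<noteq> 0" "D \<noteq> 0" using eps_pos by auto
    then have Lpos: "L > 0" and Dpos: "D > 0" using L0 D0 by auto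
    obtain \<delta>0 where \<delta>0: "\<delta>0 > 0" "\<forall>t. \<bar>t\<bar> < \<delta>0 \<longrightarrow> (\<integral>\<^sup>+ \<xi>. ennreal (exp (t * \<kappa> \<xi>)) \<partial>P) < \<infinity>"
      using C3 by blast
    define t0 where "t0 = \<delta>0 / 2"
    have t0: "t0 > 0" using \<delta>0 unfolding t0_def by simp
    define A where "A = (\<integral>\<^sup>+ \<xi>. ennreal (exp (t0 * \<kappa> \<xi>)) \<partial>P)"
    have At: "A \<noteq> top" using \<delta>0(2)[rule_format, of t0] \<delta>0(1) unfolding A_def t0_def by simp
    have "(\<integral>\<^sup>+ \<xi>. 1 \<partial>P) \<le> A" unfolding A_def
      by (rule nn_integral_mono) (use kappa_nonneg t0 in auto)
    then have A1: "1 \<le> A" by (simp add: emeasure_space_1)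
    define Ar where "Ar = enn2real A"
    have AAr: "A = ennreal Ar" using At unfolding Ar_def by (simp add: ennreal_enn2real_if)
    have Ar1: "1 \<le> Ar" using A1 unfolding AAr by (simp add: ennreal_le_iff[symmetric])
    define M where "M = (ln Ar + 1) / t0"
    have M: "M > 0" using Ar1 t0 unfolding M_def by (simp add: add_nonneg_pos)
    have t0M: "t0 * M = ln Ar + 1" using t0 unfolding M_def by simp
    have fm[measurable]: "\<And>x. (\<lambda>\<xi>. f \<xi> x) \<in> borel_measurable P" using f_meas by auto
    note kappa_meas[measurable]
    have tailK: "emeasure (PiM {..<N} (\<lambda>_. P)) {s\<in>space (PiM {..<N} (\<lambda>_. P)). real N * M \<le> (\<Sum>i<N. \<kappa> (s i))}
       \<le> ennreal (exp (- real N))" for N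
    proof -
      have "emeasure (PiM {..<N} (\<lambda>_. P)) {s\<in>space (PiM {..<N} (\<lambda>_. P)). real N * M \<le> (\<Sum>i<N. \<kappa> (s i))}
         \<le> ennreal (exp (-t0 * (real N * M))) * A ^ N"
        unfolding A_def by (rule chernoff[OF P kappa_meas t0])
      also have "\<dots> = ennreal (exp (-t0 * (real N * M)) * Ar ^ N)"
        unfolding AAr using Ar1 by (simp add: ennreal_power ennreal_mult)
      also have "exp (-t0 * (real N * M)) * Ar ^ N = exp (- real N)"
      proof -
        have "Ar ^ N = exp (real N * ln Ar)" using Ar1 by (simp add: exp_of_nat_mult)
        moreover have "-t0 * (real N * M) = - real N * (ln Ar + 1)"
        proof -
          have "-t0 * (real N * M) = - real N * (t0 * M)" by (simp add: algebra_simps)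
          then show ?thesis using t0M by simp
        qed
        ultimately show ?thesis by (simp add: exp_add[symmetric] algebra_simps)
      qed
      finally show ?thesis .
    qed
    define \<delta> where "\<delta> = \<epsilon> / (4 * (M + L))"
    have \<delta>1: "\<delta> > 0" using M Lpos eps_pos unfolding \<delta>_def by simp
    have "\<delta> * (M + L) = \<epsilon> / 4" using M Lpos unfolding \<delta>_def by (simp add: field_simps)
    then have "\<delta> * M + \<delta> * L = \<epsilon> / 4" by (simp add: distrib_left)
    note \<delta> = \<delta>1 this
    have "\<exists>k. finite k \<and> k \<subseteq> B \<inter> \<X> \<and> B \<inter> \<X> \<subseteq> (\<Union>x\<in>k. ball x \<delta>)"
      by (rule seq_compact_imp_totally_bounded[OF compact_imp_seq_compact[OF BX_compact], rule_format, OF \<delta>(1)])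
    then obtain C where C0: "finite C \<and> C \<subseteq> B \<inter> \<X> \<and> B \<inter> \<X> \<subseteq> (\<Union>c\<in>C. ball c \<delta>)"
      by (rule exE)
    note C = conjunct1[OF C0] conjunct1[OF conjunct2[OF C0]] conjunct2[OF conjunct2[OF C0]]
    define V where "V = (\<lambda>\<xi>. real_of_ereal (f \<xi> x0) - real_of_ereal (F x0))"
    define U where "U = (\<lambda>c \<xi>. - (real_of_ereal (f \<xi> c) - real_of_ereal (F c)))"
    have Vm[measurable]: "V \<in> borel_measurable P" unfolding V_def by measurable
    have Um[measurable]: "U c \<in> borel_measurable P" for c unfolding U_def by measurable
    have tailV: "emeasure (PiM {..<N} (\<lambda>_. P)) {s\<in>space (PiM {..<N} (\<lambda>_. P)). real N * \<epsilon> / 8 \<le> (\<Sum>i<N. V (s i))}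
       \<le> ennreal (exp (- real N * \<epsilon>\<^sup>2 / (128 * \<sigma>\<^sup>2)))" for N
    proof -
      have mV: "(\<integral>\<^sup>+\<xi>. ennreal (exp ((\<epsilon>/(8*\<sigma>\<^sup>2)) * V \<xi>)) \<partial>P) \<le> ennreal (exp (\<sigma>\<^sup>2*(\<epsilon>/(8*\<sigma>\<^sup>2))\<^sup>2/2))"
        unfolding V_def using C4 x0B by blast
      show ?thesis by (rule subg_tail[OF P Vm sigma_pos eps_pos mV])
    qed
    have tailU: "emeasure (PiM {..<N} (\<lambda>_. P)) {s\<in>space (PiM {..<N} (\<lambda>_. P)). real N * \<epsilon> / 8 \<le> (\<Sum>i<N. U c (s i))}
       \<le> ennreal (exp (- real N * \<epsilon>\<^sup>2 / (128 * \<sigma>\<^sup>2)))" if c: "c \<in> C" for N c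
    proof (rule subg_tail[OF P Um sigma_pos eps_pos])
      have "(\<integral>\<^sup>+\<xi>. ennreal (exp ((\<epsilon>/(8*\<sigma>\<^sup>2)) * U c \<xi>)) \<partial>P)
          = (\<integral>\<^sup>+\<xi>. ennreal (exp ((-(\<epsilon>/(8*\<sigma>\<^sup>2))) * (real_of_ereal (f \<xi> c) - real_of_ereal (F c)))) \<partial>P)"
        unfolding U_def mult_minus_right mult_minus_left ..
      also have "\<dots> \<le> ennreal (exp (\<sigma>\<^sup>2 * (-(\<epsilon>/(8*\<sigma>\<^sup>2)))\<^sup>2 / 2))"
        using C4 c C(2) by blast
      finally show "(\<integral>\<^sup>+\<xi>. ennreal (exp ((\<epsilon>/(8*\<sigma>\<^sup>2)) * U c \<xi>)) \<partial>P) \<le> ennreal (exp (\<sigma>\<^sup>2*(\<epsilon>/(8*\<sigma>\<^sup>2))\<^sup>2/2))"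
        by simp
    qed
    have bound: "measure (PiM {..<N} (\<lambda>_. P))
       {s\<in>space (PiM {..<N} (\<lambda>_. P)). F (xstar N s) > Fstar + ereal \<epsilon>}
       \<le> exp (- real N) + (real (card C) + 1) * exp (- real N * \<epsilon>\<^sup>2 / (128 * \<sigma>\<^sup>2))"
      if N: "N \<ge> 1" for N
    proof -
      define PN where "PN = PiM {..<N} (\<lambda>_. P)"
      define E where "E = {s\<in>space PN. F (xstar N s) > Fstar + ereal \<epsilon>}"
      define A0 where "A0 = {s\<in>space PN. real N * M \<le> (\<Sum>i<N. \<kappa> (s i))}"
      define A2 where "A2 = {s\<in>space PN. real N * \<epsilon> / 8 \<le> (\<Sum>i<N. V (s i))}"
      define A1 where "A1 = (\<lambda>c. {s\<in>space PN. real N * \<epsilon> / 8 \<le> (\<Sum>i<N. U c (s i))})"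
      have A0s: "A0 \<in> sets PN" unfolding A0_def PN_def by measurable
      have A2s: "A2 \<in> sets PN" unfolding A2_def PN_def by measurable
      have A1s: "A1 c \<in> sets PN" for c unfolding A1_def PN_def by measurable
      have incl: "E \<subseteq> A0 \<union> A2 \<union> (\<Union>c\<in>C. A1 c)"
      proof
        fix s assume sE: "s \<in> E"
        then have s: "s \<in> space PN" and ev: "F (xstar N s) > Fstar + ereal \<epsilon>" unfolding E_def by auto
        have si: "s i \<in> space P" if "i < N" for i using PiM_mem[OF s[unfolded PN_def]] that by auto
        obtain z' where z': "z' \<in> B \<inter> \<X>" "F z' = ereal c"
          "(\<Sum>i<N. real_of_ereal (f (s i) z')) \<le> (\<Sum>i<N. real_of_ereal (f (s i) x0))"
          using cross[OF N s[unfolded PN_def] ev] by blast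
        obtain c' where c': "c' \<in> C" "dist c' z' < \<delta>" using C(3) z'(1) by auto
        have c'B: "c' \<in> B \<inter> \<X>" using c' C(2) by auto
        show "s \<in> A0 \<union> A2 \<union> (\<Union>c\<in>C. A1 c)"
        proof (cases "real N * M \<le> (\<Sum>i<N. \<kappa> (s i))")
          case True then show ?thesis using s unfolding A0_def by auto
        next
          case False
          have k0: "0 \<le> (\<Sum>i<N. \<kappa> (s i))" using kappa_nonneg si by (intro sum_nonneg) auto
          have "(\<Sum>i<N. real_of_ereal (f (s i) c')) \<le> (\<Sum>i<N. real_of_ereal (f (s i) z') + \<kappa> (s i) * dist c' z')"
            by (rule sum_mono) (use flip si c'B z'(1) in fastforce)
          also have "\<dots> = (\<Sum>i<N. real_of_ereal (f (s i) z')) + dist c' z' * (\<Sum>i<N. \<kappa> (s i))"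
            by (simp add: sum.distrib sum_distrib_left mult.commute)
          finally have S1: "(\<Sum>i<N. real_of_ereal (f (s i) c')) \<le> (\<Sum>i<N. real_of_ereal (f (s i) z')) + dist c' z' * (\<Sum>i<N. \<kappa> (s i))" .
          have S2: "dist c' z' * (\<Sum>i<N. \<kappa> (s i)) \<le> \<delta> * (real N * M)"
            using c'(2) False k0 \<delta>(1) by (intro mult_mono) auto
          have "real_of_ereal (F z') - real_of_ereal (F c') \<le> L * dist z' c'" by (rule Flip[OF z'(1) c'B])
          also have "\<dots> \<le> L * \<delta>" using c'(2) Lpos by (simp add: dist_commute)
          finally have Fc: "c - L * \<delta> \<le> real_of_ereal (F c')" using z'(2) by simp
          have SU: "(\<Sum>i<N. U c' (s i)) = - (\<Sum>i<N. real_of_ereal (f (s i) c')) + real N * real_of_ereal (F c')"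
            unfolding U_def by (simp add: sum_negf sum_subtractf)
          have SV: "(\<Sum>i<N. V (s i)) = (\<Sum>i<N. real_of_ereal (f (s i) x0)) - real N * fs"
            unfolding V_def by (simp add: sum_subtractf Fx0)
          have F3: "real N * (c - L * \<delta>) \<le> real N * real_of_ereal (F c')"
            using Fc by (intro mult_left_mono) auto
          have F4: "real N * (c - L * \<delta>) = real N * fs + real N * \<epsilon> - real N * (\<delta> * L)"
            unfolding c_def by (simp add: algebra_simps)
          have F5: "\<delta> * (real N * M) = real N * (\<delta> * M)" by simp
          have F6: "real N * (\<delta> * M) + real N * (\<delta> * L) = real N * \<epsilon> / 4"
          proof -
            have "real N * (\<delta> * M) + real N * (\<delta> * L) = real N * (\<delta> * M + \<delta> * L)" by (simp only: distrib_left)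
            then show ?thesis using \<delta>(2) by simp
          qed
          have "(\<Sum>i<N. U c' (s i)) + (\<Sum>i<N. V (s i)) \<ge> 2 * (real N * \<epsilon> / 8)"
            using S1 S2 z'(3) SU SV F3 F4 F5 F6 eps_pos mult_nonneg_nonneg[of "real N" \<epsilon>] by linarith
          then have "real N * \<epsilon> / 8 \<le> (\<Sum>i<N. U c' (s i)) \<or> real N * \<epsilon> / 8 \<le> (\<Sum>i<N. V (s i))" by linarith
          then show ?thesis using s c'(1) unfolding A1_def A2_def by auto
        qed
      qed
      have Es: "E \<in> sets PN" unfolding E_def PN_def using event_meas N by auto
      have "emeasure PN E \<le> emeasure PN (A0 \<union> A2 \<union> (\<Union>c\<in>C. A1 c))"
        by (rule emeasure_mono[OF incl]) (use A0s A2s A1s C(1) in auto)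
      also have "\<dots> \<le> emeasure PN (A0 \<union> A2) + emeasure PN (\<Union>c\<in>C. A1 c)"
        by (rule emeasure_subadditive) (use A0s A2s A1s C(1) in auto)
      also have "\<dots> \<le> (emeasure PN A0 + emeasure PN A2) + (\<Sum>c\<in>C. emeasure PN (A1 c))"
        by (intro add_mono emeasure_subadditive emeasure_subadditive_finite) (use A0s A2s A1s C(1) in auto)
      also have "\<dots> \<le> (ennreal (exp (- real N)) + ennreal (exp (- real N * \<epsilon>\<^sup>2 / (128 * \<sigma>\<^sup>2))))
          + of_nat (card C) * ennreal (exp (- real N * \<epsilon>\<^sup>2 / (128 * \<sigma>\<^sup>2)))"
        by (intro add_mono sum_bounded_above)
          (use tailK tailV tailU in \<open>auto simp: A0_def A1_def A2_def PN_def\<close>)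
      also have "\<dots> = ennreal (exp (- real N) + (real (card C) + 1) * exp (- real N * \<epsilon>\<^sup>2 / (128 * \<sigma>\<^sup>2)))"
        by (simp add: ennreal_of_nat_eq_real_of_nat ennreal_mult[symmetric] ennreal_plus[symmetric] algebra_simps
            del: ennreal_plus)
      finally have "emeasure PN E \<le> ennreal (exp (- real N) + (real (card C) + 1) * exp (- real N * \<epsilon>\<^sup>2 / (128 * \<sigma>\<^sup>2)))" .
      then have "measure PN E \<le> exp (- real N) + (real (card C) + 1) * exp (- real N * \<epsilon>\<^sup>2 / (128 * \<sigma>\<^sup>2))"
        unfolding measure_def by (rule enn2real_leI[rotated]) (simp add: add_nonneg_nonneg)
      then show ?thesis unfolding PN_def E_def .
    qed
    define \<rho> where "\<rho> = (real (card C) + 1) * \<epsilon> / (8 * D * L)"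
    have \<rho>: "\<rho> > 0" using eps_pos Dpos Lpos unfolding \<rho>_def by simp
    have base: "8 * \<rho> * D * L / \<epsilon> = real (card C) + 1"
      using eps_pos Dpos Lpos unfolding \<rho>_def by (simp add: field_simps)
    have pw: "real (card C) + 1 \<le> (real (card C) + 1) ^ CARD('n)"
      by (rule self_le_power) auto
    have main: "\<forall>N\<ge>(1::nat). measure (PiM {..<N} (\<lambda>_. P))
         {s\<in>space (PiM {..<N} (\<lambda>_. P)). F (xstar N s) > Fstar + ereal \<epsilon>}
         \<le> exp (- real N * 1) + 2 * (8 * \<rho> * D * L / \<epsilon>) ^ CARD('n) * exp (- real N * \<epsilon>\<^sup>2 / (128 * \<sigma>\<^sup>2))"
    proof (intro allI impI)
      fix N :: nat assume N: "N \<ge> 1"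
      have exp1: "exp (- real N * 1) = exp (- real N)" by simp
      have "(real (card C) + 1) * exp (- real N * \<epsilon>\<^sup>2 / (128 * \<sigma>\<^sup>2))
          \<le> 2 * (8 * \<rho> * D * L / \<epsilon>) ^ CARD('n) * exp (- real N * \<epsilon>\<^sup>2 / (128 * \<sigma>\<^sup>2))"
        unfolding base using pw by (intro mult_right_mono) auto
      then show "measure (PiM {..<N} (\<lambda>_. P))
         {s\<in>space (PiM {..<N} (\<lambda>_. P)). F (xstar N s) > Fstar + ereal \<epsilon>}
         \<le> exp (- real N * 1) + 2 * (8 * \<rho> * D * L / \<epsilon>) ^ CARD('n) * exp (- real N * \<epsilon>\<^sup>2 / (128 * \<sigma>\<^sup>2))"
        using bound[OF N] exp1 by linarith
    qed
    have one: "(1::real) > 0" by simp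
    show ?thesis using main \<rho> one by blast
  qed
qed

end
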